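(* Let $1<q<\infty$, $\alpha,\beta\in\mathbb R$, and let $f\in\mathbb W_q^{\alpha,\beta}$ be nonnegative on $[-1,1]$. Then, for every $\delta>0$, \[ \omega_\varphi^1(f,\delta)_{w_{\alpha,\beta},q}\le c\,\omega_\varphi^1(f^q,\delta)_{w_{q\alpha,q\beta},1}^{1/q}, \] with $c$ independent of $f$ and $\delta$.
   Context: For $x\in[-1,1]$, $\varphi(x)=\sqrt{1-x^2}$, $w_{\alpha,\beta}(x)=(1+x)^\alpha(1-x)^\beta$. $\|g\|_{L_q(S)}$ is the $L_q$ norm over $S$; $\mathbb W_q^{\alpha,\beta}=\{f:\|w_{\alpha,\beta}f\|_{L_q[-1,1]}<\infty\}$. $\Delta_h^1(f,x)=f(x+h/2)-f(x-h/2)$ if $x\pm h/2\in[-1,1]$, else $0$; $\overrightarrow\Delta_h^1(f,x)=\Delta_h^1(f,x+h/2)$, $\overleftarrow\Delta_h^1(f,x)=\Delta_h^1(f,x-h/2)$. For a weight $w$ and $1\le q\le\infty$: $\Omega_\varphi^1(f,\delta)_{w,q}=\sup_{0<h\le\delta}\|w(x)\Delta^1_{h\varphi(x)}(f,x)\|_{L_q[-1+2h^2,1-2h^2]}$, $\overrightarrow\Omega_\varphi^1(f,\delta)_{w,q}=\sup_{0<h\le2\delta^2}\|w\overrightarrow\Delta_h^1(f,\cdot)\|_{L_q[-1,-1+2\delta^2]}$, $\overleftarrow\Omega_\varphi^1(f,\delta)_{w,q}=\sup_{0<h\le2\delta^2}\|w\overleftarrow\Delta_h^1(f,\cdot)\|_{L_q[1-2\delta^2,1]}$,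 and $\omega_\varphi^1=\Omega_\varphi^1+\overrightarrow\Omega_\varphi^1+\overleftarrow\Omega_\varphi^1$. *)

theory Defs
  imports "HOL-Analysis.Analysis"
begin

definition phi :: "real \<Rightarrow> real" where
  "phi x = sqrt (1 - x\<^sup>2)"

definition wab :: "real \<Rightarrow> real \<Rightarrow> real \<Rightarrow> real" where
  "wab \<alpha> \<beta> x = (1 + x) powr \<alpha> * (1 - x) powr \<beta>"

definition eroot :: "real \<Rightarrow> ennreal \<Rightarrow> ennreal" where
  "eroot q I = (if I = \<infinity> then \<infinity> else ennreal (enn2real I powr (1 / q)))"

definition Lq_norm :: "real \<Rightarrow> real set \<Rightarrow> (real \<Rightarrow> real) \<Rightarrow> ennreal" where
  "Lq_norm q S g = eroot q (\<integral>\<^sup>+ x \<in> S. ennreal (\<bar>g x\<bar> powr q) \<partial>lborel)"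

definition Delta1 :: "(real \<Rightarrow> real) \<Rightarrow> real \<Rightarrow> real \<Rightarrow> real" where
  "Delta1 f h x = (if x + h/2 \<in> {-1..1} \<and> x - h/2 \<in> {-1..1}
                   then f (x + h/2) - f (x - h/2) else 0)"

definition Delta1_fw :: "(real \<Rightarrow> real) \<Rightarrow> real \<Rightarrow> real \<Rightarrow> real" where
  "Delta1_fw f h x = Delta1 f h (x + h/2)"

definition Delta1_bw :: "(real \<Rightarrow> real) \<Rightarrow> real \<Rightarrow> real \<Rightarrow> real" where
  "Delta1_bw f h x = Delta1 f h (x - h/2)"

definition Omega_main :: "(real \<Rightarrow> real) \<Rightarrow> real \<Rightarrow> (real \<Rightarrow> real) \<Rightarrow> real \<Rightarrow> ennreal" where
  "Omega_main f \<delta> w q = (SUP h \<in> {0<..\<delta>}.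
      Lq_norm q {-1 + 2*h\<^sup>2 .. 1 - 2*h\<^sup>2} (\<lambda>x. w x * Delta1 f (h * phi x) x))"

definition Omega_fw :: "(real \<Rightarrow> real) \<Rightarrow> real \<Rightarrow> (real \<Rightarrow> real) \<Rightarrow> real \<Rightarrow> ennreal" where
  "Omega_fw f \<delta> w q = (SUP h \<in> {0<..2*\<delta>\<^sup>2}.
      Lq_norm q {-1 .. -1 + 2*\<delta>\<^sup>2} (\<lambda>x. w x * Delta1_fw f h x))"

definition Omega_bw :: "(real \<Rightarrow> real) \<Rightarrow> real \<Rightarrow> (real \<Rightarrow> real) \<Rightarrow> real \<Rightarrow> ennreal" where
  "Omega_bw f \<delta> w q = (SUP h \<in> {0<..2*\<delta>\<^sup>2}.
      Lq_norm q {1 - 2*\<delta>\<^sup>2 .. 1} (\<lambda>x. w x * Delta1_bw f h x))"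

definition omega_phi :: "(real \<Rightarrow> real) \<Rightarrow> real \<Rightarrow> (real \<Rightarrow> real) \<Rightarrow> real \<Rightarrow> ennreal" where
  "omega_phi f \<delta> w q = Omega_main f \<delta> w q + Omega_fw f \<delta> w q + Omega_bw f \<delta> w q"

definition in_Wq :: "real \<Rightarrow> real \<Rightarrow> real \<Rightarrow> (real \<Rightarrow> real) \<Rightarrow> bool" where
  "in_Wq q \<alpha> \<beta> f \<longleftrightarrow> Lq_norm q {-1..1} (\<lambda>x. wab \<alpha> \<beta> x * f x) < \<infinity>"

end

theory Submission
  imports Defs
begin

lemma superadd_powr:
  fixes u v q :: real
  assumes "0 \<le> u" "0 \<le> v" "1 \<le> q"
  shows "u powr q + v powr q \<le> (u + v) powr q"
proof (cases "u + v = 0")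
  case True
  then have "u = 0" "v = 0" using assms by auto
  then show ?thesis by simp
next
  case False
  define s where "s = u + v"
  have s: "0 < s" using False assms s_def by auto
  have a: "(u/s) powr q \<le> u/s"
  proof (cases "u = 0")
    case True then show ?thesis by simp
  next
    case False
    then show ?thesis using powr_le_one_le[of "u/s" q] assms s s_def by auto
  qed
  have b: "(v/s) powr q \<le> v/s"
  proof (cases "v = 0")
    case True then show ?thesis by simp
  next
    case False
    then show ?thesis using powr_le_one_le[of "v/s" q] assms s s_def by auto
  qed
  have "u/s + v/s = 1" using s s_def by (simp add: add_divide_distrib[symmetric])
  then have "(u/s) powr q + (v/s) powr q \<le> 1" using a b by linarith
  moreover have "(u/s) powr q = u powr q / s powr q" "(v/s) powr q = v powr q / s powr q"
    using assms s by (simp_all add: powr_divide)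
  ultimately have "(u powr q + v powr q) / s powr q \<le> 1" by (simp add: add_divide_distrib)
  then show ?thesis using s s_def by (simp add: divide_le_eq)
qed

lemma diff_powr:
  fixes a b q :: real
  assumes "0 \<le> a" "0 \<le> b" "1 \<le> q"
  shows "\<bar>a - b\<bar> powr q \<le> \<bar>a powr q - b powr q\<bar>"
proof -
  have *: "\<bar>a - b\<bar> powr q \<le> \<bar>a powr q - b powr q\<bar>" if "0 \<le> b" "b \<le> a" for a b :: real
  proof -
    have "(a - b) powr q + b powr q \<le> a powr q"
      using superadd_powr[of "a - b" b q] that assms by auto
    moreover have "b powr q \<le> a powr q" using that assms by (simp add: powr_mono2)
    ultimately show ?thesis using that by simp
  qed
  show ?thesis
  proof (cases "b \<le> a")
    case True then show ?thesis using * assms by auto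
  next
    case False then show ?thesis using *[of a b] assms by (simp add: abs_minus_commute)
  qed
qed

lemma wab_powr:
  "wab \<alpha> \<beta> y powr q = wab (q*\<alpha>) (q*\<beta>) y"
  unfolding wab_def by (simp add: powr_mult powr_powr mult.commute)

lemma wab_nonneg: "0 \<le> wab \<alpha> \<beta> y"
  unfolding wab_def by simp

lemma pointwise:
  fixes q :: real
  assumes "1 \<le> q" "\<forall>x\<in>{-1..1}. 0 \<le> f x"
  shows "\<bar>wab \<alpha> \<beta> y * Delta1 f h x\<bar> powr q
     \<le> \<bar>wab (q*\<alpha>) (q*\<beta>) y * Delta1 (\<lambda>x. f x powr q) h x\<bar>"
proof (cases "x + h/2 \<in> {-1..1} \<and> x - h/2 \<in> {-1..1}")
  case True
  let ?a = "f (x + h/2)" and ?b = "f (x - h/2)"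
  have ab: "0 \<le> ?a" "0 \<le> ?b" using True assms by auto
  have "\<bar>wab \<alpha> \<beta> y * Delta1 f h x\<bar> powr q = wab \<alpha> \<beta> y powr q * \<bar>?a - ?b\<bar> powr q"
    using True wab_nonneg[of \<alpha> \<beta> y] by (simp add: Delta1_def abs_mult powr_mult)
  also have "\<dots> \<le> wab \<alpha> \<beta> y powr q * \<bar>?a powr q - ?b powr q\<bar>"
    by (rule mult_left_mono[OF diff_powr[OF ab assms(1)]]) simp
  also have "\<dots> = \<bar>wab (q*\<alpha>) (q*\<beta>) y * Delta1 (\<lambda>x. f x powr q) h x\<bar>"
    using True wab_nonneg[of "q*\<alpha>" "q*\<beta>" y] by (simp add: Delta1_def abs_mult wab_powr)
  finally show ?thesis .
next
  case False
  then have "Delta1 f h x = 0" "Delta1 (\<lambda>x. f x powr q) h x = 0" unfolding Delta1_def using False by (auto simp only: if_not_P)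
  then show ?thesis by simp
qed

lemma eroot_mono:
  assumes "I \<le> J" "0 < q"
  shows "eroot q I \<le> eroot q J"
proof (cases "J = \<infinity>")
  case True then show ?thesis by (simp add: eroot_def)
next
  case False
  then have "I \<noteq> \<infinity>" using assms top.extremum_uniqueI by auto
  moreover have "enn2real I \<le> enn2real J" using assms False by (intro enn2real_mono) (simp_all add: less_top)
  ultimately show ?thesis using False assms
    by (auto simp: eroot_def intro!: ennreal_leI powr_mono2)
qed

lemma eroot_one: "eroot 1 I = I"
  unfolding eroot_def by (cases I) auto

lemma Lq_le:
  assumes "1 \<le> q" "\<forall>x\<in>{-1..1}. 0 \<le> f x"
  shows "Lq_norm q S (\<lambda>x. wab \<alpha> \<beta> x * Delta1 f (H x) (g x))
    \<le> eroot q (Lq_norm 1 S (\<lambda>x. wab (q*\<alpha>) (q*\<beta>) x * Delta1 (\<lambda>x. f x powr q) (H x) (g x)))"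
  unfolding Lq_norm_def eroot_one
proof (rule eroot_mono)
  show "0 < q" using assms by simp
  show "(\<integral>\<^sup>+ x\<in>S. ennreal (\<bar>wab \<alpha> \<beta> x * Delta1 f (H x) (g x)\<bar> powr q) \<partial>lborel)
    \<le> (\<integral>\<^sup>+ x\<in>S. ennreal (\<bar>wab (q*\<alpha>) (q*\<beta>) x * Delta1 (\<lambda>x. f x powr q) (H x) (g x)\<bar> powr 1) \<partial>lborel)"
    by (intro nn_integral_mono mult_right_mono ennreal_leI)
       (use pointwise[OF assms] in auto)
qed

theorem lemma4p3:
  fixes q \<alpha> \<beta> :: real
  assumes "1 < q"
  shows "\<exists>c::real. c > 0 \<and>
    (\<forall>f :: real \<Rightarrow> real.
       set_borel_measurable lborel {-1..1} f \<longrightarrow>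
       (\<forall>x\<in>{-1..1}. 0 \<le> f x) \<longrightarrow>
       in_Wq q \<alpha> \<beta> f \<longrightarrow>
       (\<forall>\<delta>>0. omega_phi f \<delta> (wab \<alpha> \<beta>) q
              \<le> ennreal c * eroot q (omega_phi (\<lambda>x. f x powr q) \<delta> (wab (q*\<alpha>) (q*\<beta>)) 1)))"
proof (intro exI[of _ 3] conjI allI impI)
  fix f :: "real \<Rightarrow> real" and \<delta> :: real
  assume f: "\<forall>x\<in>{-1..1}. 0 \<le> f x"
  have q: "1 \<le> q" "0 < q" using assms by auto
  let ?F = "\<lambda>x. f x powr q" and ?W = "wab (q*\<alpha>) (q*\<beta>)"
  let ?A = "Omega_main ?F \<delta> ?W 1" and ?B = "Omega_fw ?F \<delta> ?W 1" and ?C = "Omega_bw ?F \<delta> ?W 1"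
  let ?S = "?A + ?B + ?C"
  have A: "Omega_main f \<delta> (wab \<alpha> \<beta>) q \<le> eroot q ?A"
    unfolding Omega_main_def
    by (rule SUP_least, rule order_trans[OF Lq_le[OF q(1) f]], rule eroot_mono[OF SUP_upper q(2)])
  have B: "Omega_fw f \<delta> (wab \<alpha> \<beta>) q \<le> eroot q ?B"
    unfolding Omega_fw_def Delta1_fw_def
    by (rule SUP_least, rule order_trans[OF Lq_le[OF q(1) f]], rule eroot_mono[OF SUP_upper q(2)])
  have C: "Omega_bw f \<delta> (wab \<alpha> \<beta>) q \<le> eroot q ?C"
    unfolding Omega_bw_def Delta1_bw_def
    by (rule SUP_least, rule order_trans[OF Lq_le[OF q(1) f]], rule eroot_mono[OF SUP_upper q(2)])
  have "eroot q ?A \<le> eroot q ?S" "eroot q ?B \<le> eroot q ?S" "eroot q ?C \<le> eroot q ?S"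
    by (intro eroot_mono q(2); simp add: add_increasing add_increasing2 le_iff_add add.assoc)+
  then have "omega_phi f \<delta> (wab \<alpha> \<beta>) q \<le> eroot q ?S + eroot q ?S + eroot q ?S"
    unfolding omega_phi_def using A B C by (meson add_mono order_trans)
  also have "\<dots> = ennreal 3 * eroot q ?S"
  proof -
    have "ennreal 3 = 1 + 1 + 1" by simp
    then show ?thesis by (simp only: distrib_right mult_1)
  qed
  finally show "omega_phi f \<delta> (wab \<alpha> \<beta>) q \<le> ennreal 3 * eroot q (omega_phi ?F \<delta> ?W 1)"
    unfolding omega_phi_def .
qed simp

end
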